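(* Let $ABC$ be a triangle with incenter $I$ and circumcenter $O$, and let $P$ be a point on line $IO$. Let $A', B', C'$ be the feet of the perpendiculars from $P$ to $AI, BI, CI$ respectively. Then the Steiner line of $P$ with respect to triangle $A'B'C'$ is the Euler line of triangle $A'B'C'$.
   Context: The points $A', B', C'$ and $P$ lie on the circle with diameter $PI$, i.e. $P$ lies on the circumcircle of $A'B'C'$. For a point $X$ on the circumcircle of a triangle, the reflections of $X$ over the three sidelines are collinear; the line containing them is the Steiner line of $X$ with respect to the triangle. *)

theory Defs
  imports "HOL-Analysis.Analysis"
begin

definition incenter :: "complex \<Rightarrow> complex \<Rightarrow> complex \<Rightarrow> complex" where
  "incenter A B C =
     (dist B C *\<^sub>R A + dist C A *\<^sub>R B + dist A B *\<^sub>R C) /\<^sub>R (dist B C + dist C A + dist A B)"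

definition circumcenter :: "complex \<Rightarrow> complex \<Rightarrow> complex \<Rightarrow> complex" where
  "circumcenter A B C = (THE Z. dist Z A = dist Z B \<and> dist Z B = dist Z C)"

definition centroid :: "complex \<Rightarrow> complex \<Rightarrow> complex \<Rightarrow> complex" where
  "centroid A B C = (A + B + C) / 3"

definition foot :: "complex \<Rightarrow> complex \<Rightarrow> complex \<Rightarrow> complex" where
  "foot P X Y = X + (((P - X) \<bullet> (Y - X)) / (norm (Y - X))\<^sup>2) *\<^sub>R (Y - X)"

definition reflect :: "complex \<Rightarrow> complex \<Rightarrow> complex \<Rightarrow> complex" where
  "reflect P X Y = 2 * foot P X Y - P"

definition steiner_line :: "complex \<Rightarrow> complex \<Rightarrow> complex \<Rightarrow> complex \<Rightarrow> complex set" where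
  "steiner_line X A B C = affine hull {reflect X B C, reflect X C A, reflect X A B}"

definition euler_line :: "complex \<Rightarrow> complex \<Rightarrow> complex \<Rightarrow> complex set" where
  "euler_line A B C = affine hull {centroid A B C, circumcenter A B C}"

end

theory Submission
  imports Defs
begin


lemma foot_cx:
  assumes "X \<noteq> Y"
  shows "foot P X Y = X + of_real (Re ((P - X)/(Y - X))) * (Y - X)"
proof -
  have n: "(norm (Y - X))\<^sup>2 = (Re Y - Re X)\<^sup>2 + (Im Y - Im X)\<^sup>2"
    by (simp add: cmod_power2)
  have "(Re Y - Re X)\<^sup>2 + (Im Y - Im X)\<^sup>2 \<noteq> 0"
    using assms by (auto simp: complex_eq_iff)
  then show ?thesis
    unfolding foot_def n
    by (simp add: scaleR_conv_of_real inner_complex_def Re_divide power2_eq_square)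
qed

lemma reflect_cx:
  assumes "X \<noteq> Y"
  shows "reflect P X Y = X + cnj ((P - X)/(Y - X)) * (Y - X)"
proof -
  define q where "q = (P - X)/(Y - X)"
  have P: "P = X + q * (Y - X)" using assms by (simp add: q_def)
  have "reflect P X Y = 2 * (X + of_real (Re q) * (Y - X)) - (X + q * (Y - X))"
    unfolding reflect_def foot_cx[OF assms] q_def[symmetric] using P by simp
  also have "\<dots> = X + (2 * of_real (Re q) - q) * (Y - X)" by (simp add: algebra_simps)
  also have "2 * of_real (Re q) - q = cnj q"
    using complex_add_cnj[of q] by (simp add: algebra_simps)
  finally show ?thesis by (simp add: q_def)
qed

lemma noncol_Im:
  fixes X Y Z :: complex
  assumes "\<not> collinear {X, Y, Z}"
  shows "Im ((Y - X) * cnj (Z - X)) \<noteq> 0"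
proof
  assume h: "Im ((Y - X) * cnj (Z - X)) = 0"
  show False
  proof (cases "Y = X")
    case True
    then show False using assms collinear_2 by (metis insert_absorb2)
  next
    case False
    define r where "r = Re ((Z - X)/(Y - X))"
    have "Im ((Z - X)/(Y - X)) = 0"
      using h False by (simp add: Im_divide algebra_simps complex_eq_iff)
    then have "(Z - X)/(Y - X) = of_real r" unfolding r_def by (simp add: complex_eq_iff)
    then have "Z - X = r *\<^sub>R (Y - X)" using False by (simp add: scaleR_conv_of_real field_simps)
    then have "collinear {0, Y - X, Z - X}" using collinear_lemma by blast
    moreover have "collinear {Y, X, Z} \<longleftrightarrow> collinear {0, Y - X, Z - X}"
      by (rule collinear_3) simp
    ultimately have "collinear {X, Y, Z}" by (simp add: insert_commute)
    then show False using assms by simp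
  qed
qed

lemma circ_unique:
  fixes X Y Z Q :: complex
  assumes im: "Im ((Y - X) * cnj (Z - X)) \<noteq> 0"
    and q1: "dist Q X = dist Q Y" and q2: "dist Q Y = dist Q Z"
  shows "circumcenter X Y Z = Q"
  unfolding circumcenter_def
proof (rule the_equality)
  show "dist Q X = dist Q Y \<and> dist Q Y = dist Q Z" using q1 q2 by simp
next
  fix R assume "dist R X = dist R Y \<and> dist R Y = dist R Z"
  then have r1: "dist R X = dist R Y" and r2: "dist R Y = dist R Z" by auto
  have sq: "\<And>U V W :: complex. dist U V = dist U W \<Longrightarrow>
     (Re U - Re V)\<^sup>2 + (Im U - Im V)\<^sup>2 = (Re U - Re W)\<^sup>2 + (Im U - Im W)\<^sup>2"
    by (simp add: dist_complex_def cmod_def)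
  note e = sq[OF q1] sq[OF q2] sq[OF r1] sq[OF r2]
  define D1 where "D1 = Re R - Re Q"
  define D2 where "D2 = Im R - Im Q"
  define u1 where "u1 = Re Y - Re X"
  define u2 where "u2 = Im Y - Im X"
  define v1 where "v1 = Re Z - Re X"
  define v2 where "v2 = Im Z - Im X"
  have l1: "D1 * u1 + D2 * u2 = 0"
    using e(1) e(3) unfolding D1_def D2_def u1_def u2_def by (simp add: power2_eq_square algebra_simps)
  have l2: "D1 * v1 + D2 * v2 = 0"
    using e unfolding D1_def D2_def v1_def v2_def by (simp add: power2_eq_square algebra_simps)
  have det: "u2 * v1 - u1 * v2 \<noteq> 0"
    using im unfolding u1_def u2_def v1_def v2_def by (simp add: algebra_simps)
  have "D1 * (u2 * v1 - u1 * v2) = u2 * (D1 * v1 + D2 * v2) - v2 * (D1 * u1 + D2 * u2)"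
    by (simp add: algebra_simps)
  then have "D1 = 0" using l1 l2 det by simp
  have "D2 * (u2 * v1 - u1 * v2) = - u1 * (D1 * v1 + D2 * v2) + v1 * (D1 * u1 + D2 * u2)"
    by (simp add: algebra_simps)
  then have "D2 = 0" using l1 l2 det by simp
  show "R = Q" using \<open>D1 = 0\<close> \<open>D2 = 0\<close> unfolding D1_def D2_def by (simp add: complex_eq_iff)
qed



lemma line_pt:
  fixes M G :: complex
  assumes "ti \<noteq> tj" "Ri = M + of_real ti * (G - M)" "Rj = M + of_real tj * (G - M)"
  shows "M + of_real x * (G - M) \<in> affine hull {Ri, Rj}"
proof -
  define u where "u = (x - tj) / (ti - tj)"
  define v where "v = (ti - x) / (ti - tj)"
  have nz: "ti - tj \<noteq> 0" using assms(1) by simp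
  have "u + v = (x - tj + (ti - x)) / (ti - tj)" unfolding u_def v_def by (rule add_divide_distrib[symmetric])
  then have uv: "u + v = 1" using nz by simp
  have "u *\<^sub>R Ri + v *\<^sub>R Rj = M + of_real x * (G - M)"
  proof -
    have "u *\<^sub>R Ri + v *\<^sub>R Rj = of_real (u + v) * M + of_real (u * ti + v * tj) * (G - M)"
      unfolding assms(2,3) scaleR_conv_of_real by (simp add: algebra_simps)
    also have "u * ti + v * tj = x"
    proof -
      have e: "(x - tj) * ti + (ti - x) * tj = x * (ti - tj)" by algebra
      have "u * ti + v * tj = ((x - tj) * ti + (ti - x) * tj) / (ti - tj)"
        unfolding u_def v_def by (simp only: add_divide_distrib times_divide_eq_left)
      also have "\<dots> = x * (ti - tj) / (ti - tj)" by (simp only: e)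
      also have "\<dots> = x" using nz by simp
      finally show ?thesis .
    qed
    finally show ?thesis using uv by simp
  qed
  then show ?thesis unfolding affine_hull_2 using uv by (intro CollectI exI[of _ u] exI[of _ v]) simp
qed

lemma line_eq:
  fixes M G R1 R2 R3 :: complex
  assumes "R1 = M + of_real t1 * (G - M)" "R2 = M + of_real t2 * (G - M)"
    "R3 = M + of_real t3 * (G - M)" "t1 \<noteq> t2 \<or> t2 \<noteq> t3"
  shows "affine hull {R1, R2, R3} = affine hull {G, M}"
proof
  have "\<And>t. M + of_real t * (G - M) \<in> affine hull {G, M}"
  proof -
    fix t :: real
    have "t *\<^sub>R G + (1 - t) *\<^sub>R M = M + of_real t * (G - M)"
      by (simp add: scaleR_conv_of_real algebra_simps)
    then show "M + of_real t * (G - M) \<in> affine hull {G, M}"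
      unfolding affine_hull_2 by (intro CollectI exI[of _ t] exI[of _ "1 - t"]) simp
  qed
  then show "affine hull {R1, R2, R3} \<subseteq> affine hull {G, M}"
    using assms(1-3) by (intro hull_minimal) (auto simp: affine_affine_hull)
next
  have key: "\<And>x. M + of_real x * (G - M) \<in> affine hull {R1, R2, R3}"
  proof -
    fix x
    show "M + of_real x * (G - M) \<in> affine hull {R1, R2, R3}"
    proof (cases "t1 \<noteq> t2")
      case True
      have "affine hull {R1, R2} \<subseteq> affine hull {R1, R2, R3}" by (rule hull_mono) auto
      then show ?thesis using line_pt[OF True assms(1,2)] by blast
    next
      case False
      then have "t2 \<noteq> t3" using assms(4) by simp
      have "affine hull {R2, R3} \<subseteq> affine hull {R1, R2, R3}" by (rule hull_mono) auto
      then show ?thesis using line_pt[OF \<open>t2 \<noteq> t3\<close> assms(2,3)] by blast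
    qed
  qed
  have "G = M + of_real 1 * (G - M)" "M = M + of_real 0 * (G - M)" by simp_all
  then have "{G, M} \<subseteq> affine hull {R1, R2, R3}" using key[of 1] key[of 0] by simp
  then show "affine hull {G, M} \<subseteq> affine hull {R1, R2, R3}"
    by (intro hull_minimal) (auto simp: affine_affine_hull)
qed

lemma real_of_cnj:
  assumes "cnj z = z" shows "z = of_real (Re z)"
  using assms by (metis Reals_cnj_iff of_real_Re)



lemma unit_norm:
  fixes x :: complex
  assumes "cnj x = inverse x" "x \<noteq> 0"
  shows "norm x = 1"
proof -
  have "of_real ((norm x)\<^sup>2) = x * cnj x" by (rule complex_norm_square)
  also have "\<dots> = 1" using assms by simp
  finally have "(norm x)\<^sup>2 = 1" by (metis of_real_eq_1_iff)
  then show ?thesis using norm_ge_zero[of x] by (auto simp: power2_eq_1_iff)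
qed

lemma normalized:
  fixes M k p \<alpha> \<beta> \<gamma> :: complex
  assumes k: "k \<noteq> 0"
    and ua: "cnj \<alpha> = inverse \<alpha>" "\<alpha> \<noteq> 0"
    and ub: "cnj \<beta> = inverse \<beta>" "\<beta> \<noteq> 0"
    and uc: "cnj \<gamma> = inverse \<gamma>" "\<gamma> \<noteq> 0"
    and up: "cnj p = inverse p" "p \<noteq> 0"
    and dab: "\<alpha> \<noteq> \<beta>" and dbc: "\<beta> \<noteq> \<gamma>" and dca: "\<gamma> \<noteq> \<alpha>"
    and s1: "\<alpha> + \<beta> + \<gamma> \<noteq> 0"
    and rel: "p * (\<alpha> + \<beta> + \<gamma>) = \<alpha> * \<beta> + \<beta> * \<gamma> + \<gamma> * \<alpha>"
  shows "steiner_line (M + k * p) (M + k * \<alpha>) (M + k * \<beta>) (M + k * \<gamma>)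
           = euler_line (M + k * \<alpha>) (M + k * \<beta>) (M + k * \<gamma>)
       \<and> centroid (M + k * \<alpha>) (M + k * \<beta>) (M + k * \<gamma>)
           \<noteq> circumcenter (M + k * \<alpha>) (M + k * \<beta>) (M + k * \<gamma>)"
proof -
  define A' where "A' = M + k * \<alpha>"
  define B' where "B' = M + k * \<beta>"
  define C' where "C' = M + k * \<gamma>"
  define P where "P = M + k * p"
  define \<sigma> where "\<sigma> = \<alpha> + \<beta> + \<gamma>"
  have kk: "k * cnj k \<noteq> 0" using k by simp
  have im: "Im ((B' - A') * cnj (C' - A')) \<noteq> 0"
  proof
    assume h: "Im ((B' - A') * cnj (C' - A')) = 0"
    define z where "z = (B' - A') * cnj (C' - A')"
    have "z \<in> \<real>" unfolding complex_is_Real_iff z_def by (rule h)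
    then have "cnj z = z" by (simp add: Reals_cnj_iff)
    moreover have "z - cnj z = (k * cnj k) * ((\<beta> - \<alpha>) * (\<alpha> - \<gamma>) * (\<beta> - \<gamma>) / (\<alpha> * \<beta> * \<gamma>))"
      unfolding z_def A'_def B'_def C'_def using ua(2) ub(2) uc(2)
      by (simp add: ua(1) ub(1) uc(1) field_simps)
    moreover have "(\<beta> - \<alpha>) * (\<alpha> - \<gamma>) * (\<beta> - \<gamma>) / (\<alpha> * \<beta> * \<gamma>) \<noteq> 0"
      using dab dbc dca ua ub uc by auto
    ultimately show False using kk by simp
  qed
  have nA: "dist M A' = norm k" unfolding A'_def using unit_norm[OF ua] by (simp add: dist_norm norm_mult)
  have nB: "dist M B' = norm k" unfolding B'_def using unit_norm[OF ub] by (simp add: dist_norm norm_mult)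
  have nC: "dist M C' = norm k" unfolding C'_def using unit_norm[OF uc] by (simp add: dist_norm norm_mult)
  have circ: "circumcenter A' B' C' = M"
    by (rule circ_unique[OF im]) (simp_all add: nA nB nC)
  define G where "G = centroid A' B' C'"
  have G: "G = M + k * \<sigma> / 3" unfolding G_def centroid_def A'_def B'_def C'_def \<sigma>_def
    by (simp add: field_simps)
  have GM: "G \<noteq> M" using G k s1 unfolding \<sigma>_def by simp
  define Ra where "Ra = M + k * (\<beta> + \<gamma> - \<beta> * \<gamma> / p)"
  define Rb where "Rb = M + k * (\<gamma> + \<alpha> - \<gamma> * \<alpha> / p)"
  define Rc where "Rc = M + k * (\<alpha> + \<beta> - \<alpha> * \<beta> / p)"
  have rA: "reflect P B' C' = Ra"
  proof -
    have "B' \<noteq> C'" unfolding B'_def C'_def using k dbc by simp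
        have "reflect P B' C' = B' + cnj ((P - B')/(C' - B')) * (C' - B')"
      by (rule reflect_cx) fact
    also have "\<dots> = Ra" unfolding B'_def C'_def P_def Ra_def using k ub(2) uc(2) up(2) dbc
      by (simp add: ub(1) uc(1) up(1) field_simps)
    finally show ?thesis .
  qed
  have rB: "reflect P C' A' = Rb"
  proof -
    have "C' \<noteq> A'" unfolding A'_def C'_def using k dca by simp
        have "reflect P C' A' = C' + cnj ((P - C')/(A' - C')) * (A' - C')"
      by (rule reflect_cx) fact
    also have "\<dots> = Rb" unfolding C'_def A'_def P_def Rb_def using k uc(2) ua(2) up(2) dca
      by (simp add: uc(1) ua(1) up(1) field_simps)
    finally show ?thesis .
  qed
  have rC: "reflect P A' B' = Rc"
  proof -
    have "A' \<noteq> B'" unfolding A'_def B'_def using k dab by simp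
        have "reflect P A' B' = A' + cnj ((P - A')/(B' - A')) * (B' - A')"
      by (rule reflect_cx) fact
    also have "\<dots> = Rc" unfolding A'_def B'_def P_def Rc_def using k ua(2) ub(2) up(2) dab
      by (simp add: ua(1) ub(1) up(1) field_simps)
    finally show ?thesis .
  qed
  have s2: "\<alpha> * \<beta> + \<beta> * \<gamma> + \<gamma> * \<alpha> \<noteq> 0"
    using rel up(2) s1 by (metis mult_eq_0_iff)
  have p_eq: "p = (\<alpha> * \<beta> + \<beta> * \<gamma> + \<gamma> * \<alpha>) / \<sigma>"
    using rel s1 unfolding \<sigma>_def by (simp add: field_simps)
  define ta where "ta = 3 * (\<beta> + \<gamma> - \<beta> * \<gamma> / p) / \<sigma>"
  define tb where "tb = 3 * (\<gamma> + \<alpha> - \<gamma> * \<alpha> / p) / \<sigma>"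
  define tc where "tc = 3 * (\<alpha> + \<beta> - \<alpha> * \<beta> / p) / \<sigma>"
  define S2 where "S2 = \<alpha> * \<beta> + \<beta> * \<gamma> + \<gamma> * \<alpha>"
  have S2: "S2 \<noteq> 0" using s2 unfolding S2_def .
  have S1: "\<sigma> \<noteq> 0" using s1 unfolding \<sigma>_def .
  have pS: "p = S2 / \<sigma>" using p_eq unfolding S2_def .
  have abc: "\<alpha> * \<beta> * \<gamma> \<noteq> 0" using ua(2) ub(2) uc(2) by simp
  have cS1: "cnj \<sigma> = S2 / (\<alpha> * \<beta> * \<gamma>)"
    unfolding \<sigma>_def S2_def using ua(2) ub(2) uc(2) by (simp add: ua(1) ub(1) uc(1) field_simps)
  have cS2: "cnj S2 = \<sigma> / (\<alpha> * \<beta> * \<gamma>)"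
    unfolding \<sigma>_def S2_def using ua(2) ub(2) uc(2) by (simp add: ua(1) ub(1) uc(1) field_simps)
  have gen: "\<And>x y z N. cnj x = inverse x \<Longrightarrow> x \<noteq> 0 \<Longrightarrow> cnj y = inverse y \<Longrightarrow> y \<noteq> 0 \<Longrightarrow>
      cnj z = inverse z \<Longrightarrow> z \<noteq> 0 \<Longrightarrow> N = y * y + y * z + z * z \<Longrightarrow>
      (y + z) * S2 - y * z * \<sigma> = x * N \<Longrightarrow>
      cnj \<sigma> = S2 / (x * y * z) \<Longrightarrow> cnj S2 = \<sigma> / (x * y * z) \<Longrightarrow>
      cnj (3 * (y + z - y * z / p) / \<sigma>) = 3 * (y + z - y * z / p) / \<sigma>"
  proof -
    fix x y z N :: complex
    assume ux: "cnj x = inverse x" "x \<noteq> 0" and uy: "cnj y = inverse y" "y \<noteq> 0"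
      and uz: "cnj z = inverse z" "z \<noteq> 0" and N: "N = y * y + y * z + z * z"
      and id: "(y + z) * S2 - y * z * \<sigma> = x * N"
      and c1: "cnj \<sigma> = S2 / (x * y * z)" and c2: "cnj S2 = \<sigma> / (x * y * z)"
    have "y + z - y * z / p = ((y + z) * S2 - y * z * \<sigma>) / S2"
      unfolding pS using S1 S2 by (simp add: field_simps)
    then have e1: "3 * (y + z - y * z / p) / \<sigma> = 3 * x * N / (\<sigma> * S2)"
      unfolding id by (simp add: mult_ac)
    have cN: "cnj N = N / (y * y * z * z)" unfolding N using uy uz by (simp add: uy(1) uz(1) field_simps)
    show "cnj (3 * (y + z - y * z / p) / \<sigma>) = 3 * (y + z - y * z / p) / \<sigma>"
      unfolding e1 using ux(2) uy(2) uz(2) S1 S2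
      by (simp add: ux(1) cN c1 c2 field_simps)
  qed
  have cta: "cnj ta = ta" unfolding ta_def
    by (rule gen[OF ua ub uc refl]) (simp_all add: cS1 cS2, simp add: S2_def \<sigma>_def algebra_simps)
  have ctb: "cnj tb = tb" unfolding tb_def
    by (rule gen[OF ub uc ua refl]) (simp_all add: cS1 cS2 mult_ac, simp add: S2_def \<sigma>_def algebra_simps)
  have ctc: "cnj tc = tc" unfolding tc_def
    by (rule gen[OF uc ua ub refl]) (simp_all add: cS1 cS2 mult_ac, simp add: S2_def \<sigma>_def algebra_simps)
  have Gm: "G - M = k * \<sigma> / 3" using G by simp
  have Ra_eq: "Ra = M + of_real (Re ta) * (G - M)"
  proof -
    have "Ra = M + ta * (G - M)" unfolding Gm ta_def Ra_def using S1 by (simp add: field_simps)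
    then show ?thesis using real_of_cnj[OF cta] by simp
  qed
  have Rb_eq: "Rb = M + of_real (Re tb) * (G - M)"
  proof -
    have "Rb = M + tb * (G - M)" unfolding Gm tb_def Rb_def using S1 by (simp add: field_simps)
    then show ?thesis using real_of_cnj[OF ctb] by simp
  qed
  have Rc_eq: "Rc = M + of_real (Re tc) * (G - M)"
  proof -
    have "Rc = M + tc * (G - M)" unfolding Gm tc_def Rc_def using S1 by (simp add: field_simps)
    then show ?thesis using real_of_cnj[OF ctc] by simp
  qed
  have dAB: "Ra - Rb = k * (\<beta> - \<alpha>) * (1 - \<gamma> / p)"
    unfolding Ra_def Rb_def using up(2) by (simp add: field_simps)
  have dBC: "Rb - Rc = k * (\<gamma> - \<beta>) * (1 - \<alpha> / p)"
    unfolding Rb_def Rc_def using up(2) by (simp add: field_simps)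
  have tne: "Re ta \<noteq> Re tb \<or> Re tb \<noteq> Re tc"
  proof (rule ccontr)
    assume "\<not> (Re ta \<noteq> Re tb \<or> Re tb \<noteq> Re tc)"
    then have "Ra = Rb" "Rb = Rc" using Ra_eq Rb_eq Rc_eq by auto
    then have "k * (\<beta> - \<alpha>) * (1 - \<gamma> / p) = 0" "k * (\<gamma> - \<beta>) * (1 - \<alpha> / p) = 0"
      using dAB dBC by simp_all
    then have "1 - \<gamma> / p = 0" "1 - \<alpha> / p = 0" using k dab dbc by auto
    then have "\<gamma> = p" "\<alpha> = p" using up(2) by (simp_all add: divide_eq_1_iff)
    then show False using dca by simp
  qed
  have st: "steiner_line P A' B' C' = euler_line A' B' C'"
    unfolding steiner_line_def euler_line_def rA rB rC G_def[symmetric] circ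
    by (rule line_eq[OF Ra_eq Rb_eq Rc_eq tne])
  show ?thesis using st GM circ unfolding P_def A'_def B'_def C'_def G_def by simp
qed



lemma core:
  fixes a b c d1 d2 d3 :: complex
  assumes ca: "cnj a = a" and cb: "cnj b = b" and cc: "cnj c = c"
    and a0: "a \<noteq> 0"
    and u1: "cnj d1 = inverse d1" "d1 \<noteq> 0"
    and u2: "cnj d2 = inverse d2" "d2 \<noteq> 0"
    and u3: "cnj d3 = inverse d3" "d3 \<noteq> 0"
    and n12: "d1 \<noteq> d2" "d1 \<noteq> - d2" and n23: "d2 \<noteq> d3" "d2 \<noteq> - d3"
    and n31: "d3 \<noteq> d1" "d3 \<noteq> - d1"
    and R: "a * d1 + b * d2 + c * d3 = 0"
    and L: "L = a / (d1 * (d2\<^sup>2 - d3\<^sup>2))"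
  shows "b = L * d2 * (d3\<^sup>2 - d1\<^sup>2)" "c = L * d3 * (d1\<^sup>2 - d2\<^sup>2)"
    "cnj L = - L * d1\<^sup>2 * d2\<^sup>2 * d3\<^sup>2" "L \<noteq> 0"
    "a = L * d1 * (d2\<^sup>2 - d3\<^sup>2)"
proof -
  have sq: "\<And>x y :: complex. x \<noteq> y \<Longrightarrow> x \<noteq> - y \<Longrightarrow> x\<^sup>2 - y\<^sup>2 \<noteq> 0"
  proof
    fix x y :: complex assume "x \<noteq> y" "x \<noteq> - y" "x\<^sup>2 - y\<^sup>2 = 0"
    then have "(x - y) * (x + y) = 0" by (simp add: algebra_simps power2_eq_square)
    then show False using \<open>x \<noteq> y\<close> \<open>x \<noteq> - y\<close> by (auto simp: add_eq_0_iff2)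
  qed
  have q23: "d2\<^sup>2 - d3\<^sup>2 \<noteq> 0" using sq n23 by blast
  have q31: "d3\<^sup>2 - d1\<^sup>2 \<noteq> 0" using sq n31 by blast
  have q12: "d1\<^sup>2 - d2\<^sup>2 \<noteq> 0" using sq n12 by blast
  have "cnj (a * d1 + b * d2 + c * d3) = 0" using R by simp
  then have Rc0: "a / d1 + b / d2 + c / d3 = 0" using ca cb cc u1 u2 u3 by (simp add: divide_inverse)
  have Rc: "a * d2 * d3 + b * d1 * d3 + c * d1 * d2 = 0"
  proof -
    have "a * d2 * d3 + b * d1 * d3 + c * d1 * d2 = (d1 * d2 * d3) * (a / d1 + b / d2 + c / d3)"
      using u1(2) u2(2) u3(2) by (simp add: field_simps)
    then show ?thesis using Rc0 by simp
  qed
  have eb: "b * d1 * (d2\<^sup>2 - d3\<^sup>2) = a * d2 * (d3\<^sup>2 - d1\<^sup>2)"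
  proof -
    have "b * d1 * (d2\<^sup>2 - d3\<^sup>2) - a * d2 * (d3\<^sup>2 - d1\<^sup>2)
        = d1 * d2 * (a * d1 + b * d2 + c * d3) - d3 * (a * d2 * d3 + b * d1 * d3 + c * d1 * d2)"
      by (simp add: algebra_simps power2_eq_square)
    then show ?thesis using R Rc by simp
  qed
  have ec: "c * d1 * (d2\<^sup>2 - d3\<^sup>2) = a * d3 * (d1\<^sup>2 - d2\<^sup>2)"
  proof -
    have "c * d1 * (d2\<^sup>2 - d3\<^sup>2) - a * d3 * (d1\<^sup>2 - d2\<^sup>2)
        = - d1 * d3 * (a * d1 + b * d2 + c * d3) + d2 * (a * d2 * d3 + b * d1 * d3 + c * d1 * d2)"
      by (simp add: algebra_simps power2_eq_square)
    then show ?thesis using R Rc by simp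
  qed
  show "b = L * d2 * (d3\<^sup>2 - d1\<^sup>2)" unfolding L using eb u1(2) q23
    by (simp add: field_simps)
  show "c = L * d3 * (d1\<^sup>2 - d2\<^sup>2)" unfolding L using ec u1(2) q23
    by (simp add: field_simps)
  show "L \<noteq> 0" unfolding L using a0 u1(2) q23 by simp
  show "a = L * d1 * (d2\<^sup>2 - d3\<^sup>2)" unfolding L using u1(2) q23 by simp
  have "inverse d2 ^ 2 - inverse d3 ^ 2 = (d3\<^sup>2 - d2\<^sup>2) / (d2\<^sup>2 * d3\<^sup>2)"
    using u2(2) u3(2) by (simp add: field_simps)
  then show "cnj L = - L * d1\<^sup>2 * d2\<^sup>2 * d3\<^sup>2" unfolding L using u1(2) u2(2) u3(2) q23 ca
    by (simp add: u1(1) u2(1) u3(1) field_simps) (simp add: algebra_simps power2_eq_square)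
qed



lemma unit_dir:
  fixes X Y :: complex
  assumes "X \<noteq> Y"
  shows "cnj ((X - Y) / of_real (dist X Y)) = inverse ((X - Y) / of_real (dist X Y))"
    "(X - Y) / of_real (dist X Y) \<noteq> 0"
proof -
  have n: "norm (X - Y) \<noteq> 0" using assms by simp
  have sq: "(X - Y) * cnj (X - Y) = of_real (norm (X - Y)) * of_real (norm (X - Y))"
    using complex_norm_square[of "X - Y"] by (simp add: power2_eq_square)
  show "cnj ((X - Y) / of_real (dist X Y)) = inverse ((X - Y) / of_real (dist X Y))"
    unfolding dist_norm using n assms sq by (simp add: field_simps)
  show "(X - Y) / of_real (dist X Y) \<noteq> 0" using assms by simp
qed

lemma norm_eq_cnj:
  fixes x y :: complex
  assumes "x * cnj x = y * cnj y"
  shows "norm x = norm y"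
proof -
  have "of_real ((norm x)\<^sup>2) = (of_real ((norm y)\<^sup>2) :: complex)"
    using assms by (simp only: complex_norm_square)
  then have "(norm x)\<^sup>2 = (norm y)\<^sup>2" using of_real_eq_iff by blast
  then show ?thesis by (simp add: power2_eq_iff_nonneg)
qed

lemma foot_center:
  fixes P A I :: complex
  assumes "A \<noteq> I"
  shows "foot P A I = I + ((P - I) + cnj (P - I) * ((A - I) / cnj (A - I))) / 2"
proof -
  define v where "v = I - A"
  define w where "w = P - I"
  have v0: "v \<noteq> 0" using assms v_def by simp
  have cv0: "cnj v \<noteq> 0" using v0 by simp
  have "foot P A I = A + of_real (Re ((w + v) / v)) * v"
    unfolding foot_cx[OF assms] v_def w_def by simp
  also have "Re ((w + v) / v) = 1 + Re (w / v)" using v0 by (simp add: add_divide_distrib)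
  finally have f1: "foot P A I = A + of_real (1 + Re (w / v)) * v" .
  have "complex_of_real (Re (w / v)) = (w / v + cnj w / cnj v) / 2"
    using complex_add_cnj[of "w / v"] by simp
  then have "foot P A I = A + v + (w + cnj w * (v / cnj v)) / 2"
    unfolding f1 using v0 cv0 by (simp add: field_simps)
  moreover have "(A - I) / cnj (A - I) = v / cnj v"
  proof -
    have "A - I = - v" "cnj (A - I) = - cnj v" unfolding v_def by simp_all
    then show ?thesis by simp
  qed
  ultimately show ?thesis unfolding v_def w_def by simp
qed

lemma im_zero:
  fixes u v :: complex
  assumes "cnj v = inverse v" "v \<noteq> 0" "u = v \<or> u = - v"
  shows "Im (of_real r * u * cnj v) = 0"
  using assms by (auto simp: assms(1))



lemma ratio:
  fixes L x y z V :: complex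
  assumes cL: "cnj L = - L * x\<^sup>2 * y\<^sup>2 * z\<^sup>2" "L \<noteq> 0"
    and ux: "cnj x = inverse x" "x \<noteq> 0" and uy: "cnj y = inverse y" "y \<noteq> 0"
    and uz: "cnj z = inverse z" "z \<noteq> 0"
    and xy: "x + y \<noteq> 0" and xz: "x + z \<noteq> 0"
    and V: "V = - (L * y * z * (x + y) * (x + z))"
  shows "V / cnj V = - (y * z)" "V \<noteq> 0"
proof -
  have cV: "cnj V = L * (x + y) * (x + z)"
    unfolding V using ux(2) uy(2) uz(2) by (simp add: cL(1) ux(1) uy(1) uz(1) field_simps) (simp add: algebra_simps power2_eq_square)
  show "V \<noteq> 0" unfolding V using cL(2) uy(2) uz(2) xy xz by simp
  have cV0: "cnj V \<noteq> 0" unfolding cV using cL(2) xy xz by simp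
  have "V = (- (y * z)) * (L * (x + y) * (x + z))" unfolding V by (simp add: algebra_simps)
  then have "V = (- (y * z)) * cnj V" unfolding cV .
  then show "V / cnj V = - (y * z)" using cV0 by (metis nonzero_mult_div_cancel_right)
qed

theorem proposition3p1:
  fixes A B C P :: complex
  assumes "\<not> collinear {A, B, C}"
    and "incenter A B C \<noteq> circumcenter A B C"
    and "P \<in> affine hull {incenter A B C, circumcenter A B C}"
    and "P \<noteq> incenter A B C"
  shows "steiner_line P (foot P A (incenter A B C)) (foot P B (incenter A B C))
            (foot P C (incenter A B C))
         = euler_line (foot P A (incenter A B C)) (foot P B (incenter A B C))
            (foot P C (incenter A B C))
       \<and> centroid (foot P A (incenter A B C)) (foot P B (incenter A B C)) (foot P C (incenter A B C))
         \<noteq> circumcenter (foot P A (incenter A B C)) (foot P B (incenter A B C)) (foot P C (incenter A B C))"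
proof -
  define I where "I = incenter A B C"
  define Oc where "Oc = circumcenter A B C"
  have im1: "Im ((B - A) * cnj (C - A)) \<noteq> 0" using noncol_Im assms(1) by blast
  have im2: "Im ((C - B) * cnj (A - B)) \<noteq> 0"
    using noncol_Im[of B C A] assms(1) by (simp add: insert_commute)
  have im3: "Im ((A - C) * cnj (B - C)) \<noteq> 0"
    using noncol_Im[of C A B] assms(1) by (simp add: insert_commute)
  have AB: "A \<noteq> B" using im1 by auto
  have BC: "B \<noteq> C" using im2 by auto
  have CA: "C \<noteq> A" using im3 by auto
  define a where "a = dist B C"
  define b where "b = dist C A"
  define c where "c = dist A B"
  have a0: "a > 0" "complex_of_real a \<noteq> 0" using BC unfolding a_def by auto
  have b0: "b > 0" "complex_of_real b \<noteq> 0" using CA unfolding b_def by auto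
  have c0: "c > 0" "complex_of_real c \<noteq> 0" using AB unfolding c_def by auto
  define d1 where "d1 = (B - C) / of_real a"
  define d2 where "d2 = (C - A) / of_real b"
  define d3 where "d3 = (A - B) / of_real c"
  have u1: "cnj d1 = inverse d1" "d1 \<noteq> 0" using unit_dir[OF BC] unfolding d1_def a_def by auto
  have u2: "cnj d2 = inverse d2" "d2 \<noteq> 0" using unit_dir[OF CA] unfolding d2_def b_def by auto
  have u3: "cnj d3 = inverse d3" "d3 \<noteq> 0" using unit_dir[OF AB] unfolding d3_def c_def by auto
  have eB: "B = A - of_real c * d3" unfolding d3_def using c0 by simp
  have eC: "C = A + of_real b * d2" unfolding d2_def using b0 by simp
  have eBC: "B - C = of_real a * d1" unfolding d1_def using a0 by simp
  have R: "of_real a * d1 + of_real b * d2 + of_real c * d3 = 0"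
    using eB eC eBC by (simp add: algebra_simps)
  have n23: "d3 \<noteq> d2" "d3 \<noteq> - d2"
  proof -
    have "(B - A) * cnj (C - A) = of_real (- (c * b)) * d3 * cnj d2" unfolding eB eC by simp
    then show "d3 \<noteq> d2" "d3 \<noteq> - d2" using im1 im_zero[OF u2, of d3 "- (c * b)"] by auto
  qed
  have n13: "d1 \<noteq> d3" "d1 \<noteq> - d3"
  proof -
    have "(C - B) * cnj (A - B) = of_real (- (a * c)) * d1 * cnj d3"
    proof -
      have "C - B = - (of_real a * d1)" using eBC by (simp add: algebra_simps)
      moreover have "A - B = of_real c * d3" unfolding eB by simp
      ultimately show ?thesis by simp
    qed
    then show "d1 \<noteq> d3" "d1 \<noteq> - d3" using im2 im_zero[OF u3, of d1 "- (a * c)"] by auto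
  qed
  have n12: "d2 \<noteq> d1" "d2 \<noteq> - d1"
  proof -
    have "(A - C) * cnj (B - C) = of_real (- (b * a)) * d2 * cnj d1"
    proof -
      have "A - C = - (of_real b * d2)" unfolding eC by simp
      then show ?thesis using eBC by simp
    qed
    then show "d2 \<noteq> d1" "d2 \<noteq> - d1" using im3 im_zero[OF u1, of d2 "- (b * a)"] by auto
  qed
  define L where "L = of_real a / (d1 * (d2\<^sup>2 - d3\<^sup>2))"
  have m12: "d1 \<noteq> d2" "d1 \<noteq> - d2" using n12 by auto
  have m23: "d2 \<noteq> d3" "d2 \<noteq> - d3" using n23 by auto
  have m31: "d3 \<noteq> d1" "d3 \<noteq> - d1" using n13 by auto
  have cabc: "cnj (complex_of_real a) = complex_of_real a" "cnj (complex_of_real b) = complex_of_real b"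
    "cnj (complex_of_real c) = complex_of_real c" by simp_all
  note cr = core[OF cabc a0(2) u1 u2 u3 m12 m23 m31 R L_def]
  have Lb: "of_real b = L * d2 * (d3\<^sup>2 - d1\<^sup>2)" by (rule cr(1))
  have Lc: "of_real c = L * d3 * (d1\<^sup>2 - d2\<^sup>2)" by (rule cr(2))
  have cL: "cnj L = - L * d1\<^sup>2 * d2\<^sup>2 * d3\<^sup>2" by (rule cr(3))
  have L0: "L \<noteq> 0" by (rule cr(4))
  have La: "of_real a = L * d1 * (d2\<^sup>2 - d3\<^sup>2)" by (rule cr(5))
  have IA0: "I = A + of_real (b * c / (a + b + c)) * (d2 - d3)"
  proof -
    have s0: "a + b + c \<noteq> 0" using a0 b0 c0 by simp
    have s0c: "complex_of_real a + complex_of_real b + complex_of_real c \<noteq> 0"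
      by (metis of_real_add of_real_eq_0_iff s0)
    have "I = (a *\<^sub>R A + b *\<^sub>R B + c *\<^sub>R C) /\<^sub>R (a + b + c)"
      unfolding I_def incenter_def a_def b_def c_def by simp
    also have "\<dots> = A + of_real (b * c / (a + b + c)) * (d2 - d3)"
      unfolding eB eC scaleR_conv_of_real using s0c
      by (simp add: field_simps)
    finally show ?thesis .
  qed
  have IA: "I - A = L * d2 * d3 * (d3 + d1) * (d1 + d2)"
  proof -
    have s0: "complex_of_real (a + b + c) \<noteq> 0" using a0 b0 c0 by (simp only: of_real_eq_0_iff)
    have "of_real (b * c) * (d2 - d3) = (L * d2 * d3 * (d3 + d1) * (d1 + d2)) * of_real (a + b + c)"
      unfolding of_real_mult of_real_add Lb Lc La by (simp add: algebra_simps power2_eq_square)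
    note eq = this
    have "I - A = of_real (b * c) * (d2 - d3) / of_real (a + b + c)"
      unfolding IA0 of_real_divide by simp
    also have "\<dots> = L * d2 * d3 * (d3 + d1) * (d1 + d2)" unfolding eq using s0 by simp
    finally show ?thesis .
  qed
  define Q where "Q = A + L * d2\<^sup>2 * d3\<^sup>2"
  have cQ: "cnj (L * d2\<^sup>2 * d3\<^sup>2) = - L * d1\<^sup>2"
    using u2(2) u3(2) by (simp add: cL u2(1) u3(1) field_simps)
  have QA: "Q - A = L * d2\<^sup>2 * d3\<^sup>2" unfolding Q_def by simp
  have QB: "Q - B = L * d2\<^sup>2 * d3\<^sup>2 + of_real c * d3" unfolding Q_def eB by simp
  have QC: "Q - C = L * d2\<^sup>2 * d3\<^sup>2 - of_real b * d2" unfolding Q_def eC by simp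
  have cQB: "cnj (Q - B) = - L * d1\<^sup>2 + of_real c * inverse d3"
    unfolding QB by (simp add: cQ u3(1) del: complex_cnj_mult) (simp add: cQ[unfolded complex_cnj_mult] u3(1))
  have cQC: "cnj (Q - C) = - L * d1\<^sup>2 - of_real b * inverse d2"
    unfolding QC using cQ by (simp add: u2(1))
  have cQA: "cnj (Q - A) = - L * d1\<^sup>2" unfolding QA by (rule cQ)
  have dQAB: "dist Q A = dist Q B"
  proof -
    have "(Q - B) * cnj (Q - B) = (Q - A) * cnj (Q - A)"
      unfolding cQB cQA unfolding QB QA Lc using u3(2) by (simp add: field_simps power2_eq_square)
    then show ?thesis unfolding dist_norm by (metis norm_eq_cnj)
  qed
  have dQBC: "dist Q B = dist Q C"
  proof -
    have "(Q - C) * cnj (Q - C) = (Q - A) * cnj (Q - A)"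
      unfolding cQC cQA unfolding QC QA Lb using u2(2) by (simp add: field_simps power2_eq_square)
    then show ?thesis using dQAB unfolding dist_norm by (metis norm_eq_cnj)
  qed
  have OQ: "Oc = Q" unfolding Oc_def by (rule circ_unique[OF im1 dQAB dQBC])
  define e where "e = d1 + d2 + d3"
  define ce where "ce = inverse d1 + inverse d2 + inverse d3"
  have cee: "cnj e = ce" unfolding e_def ce_def by (simp add: u1(1) u2(1) u3(1))
  have OI: "Oc - I = - L * d1 * d2 * d3 * e"
  proof -
    have "Oc - I = (Q - A) - (I - A)" unfolding OQ by simp
    then show ?thesis unfolding QA IA e_def by (simp add: algebra_simps power2_eq_square)
  qed
  have cOI: "cnj (Oc - I) = L * d1 * d2 * d3 * ce"
    unfolding OI using u1(2) u2(2) u3(2) by (simp add: cL cee[symmetric] u1(1) u2(1) u3(1) field_simps power2_eq_square)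
  have e0: "e \<noteq> 0" using assms(2) OI unfolding I_def[symmetric] Oc_def[symmetric] by auto
  have ce0: "ce \<noteq> 0" using e0 cee by auto
  have VA: "A - I = - (L * d2 * d3 * (d1 + d2) * (d1 + d3))" using IA by (simp add: algebra_simps)
  have VB: "B - I = - (L * d3 * d1 * (d2 + d3) * (d2 + d1))"
  proof -
    have "B - I = - of_real c * d3 - (I - A)" unfolding eB by simp
    then show ?thesis unfolding IA Lc by (simp add: algebra_simps power2_eq_square)
  qed
  have VC: "C - I = - (L * d1 * d2 * (d3 + d1) * (d3 + d2))"
  proof -
    have "C - I = of_real b * d2 - (I - A)" unfolding eC by simp
    then show ?thesis unfolding IA Lb by (simp add: algebra_simps power2_eq_square)
  qed
  have s12: "d1 + d2 \<noteq> 0" "d2 + d1 \<noteq> 0" using n12(2) by (auto simp: add_eq_0_iff2 add_eq_0_iff)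
  have s13: "d1 + d3 \<noteq> 0" "d3 + d1 \<noteq> 0" using n13(2) by (auto simp: add_eq_0_iff2 add_eq_0_iff)
  have s23: "d2 + d3 \<noteq> 0" "d3 + d2 \<noteq> 0" using n23(2) by (auto simp: add_eq_0_iff2 add_eq_0_iff)
  have rA: "(A - I) / cnj (A - I) = - (d2 * d3)" "A - I \<noteq> 0"
    using ratio[OF cL L0 u1 u2 u3 s12(1) s13(1) VA] by auto
  have rB: "(B - I) / cnj (B - I) = - (d3 * d1)" "B - I \<noteq> 0"
    using ratio[of L d2 d3 d1, OF _ L0 u2 u3 u1 s23(1) s12(2) VB] cL by (auto simp: mult_ac)
  have rC: "(C - I) / cnj (C - I) = - (d1 * d2)" "C - I \<noteq> 0"
    using ratio[of L d3 d1 d2, OF _ L0 u3 u1 u2 s13(2) s23(2) VC] cL by (auto simp: mult_ac)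
  obtain u v where uv: "P = u *\<^sub>R I + v *\<^sub>R Oc" "u + v = 1"
    using assms(3) unfolding I_def[symmetric] Oc_def[symmetric] affine_hull_2 by blast
  define w where "w = P - I"
  have wv: "w = of_real v * (Oc - I)"
  proof -
    have uu: "u = 1 - v" using uv(2) by simp
    show ?thesis unfolding w_def uv(1) scaleR_conv_of_real unfolding uu by (simp add: algebra_simps)
  qed
  have w0: "w \<noteq> 0" using assms(4) unfolding w_def I_def by simp
  have v0: "complex_of_real v \<noteq> 0" using w0 wv by auto
  have cw0: "cnj w \<noteq> 0" using w0 by simp
  define k where "k = cnj w / 2"
  define M where "M = I + w / 2"
  define p where "p = w / cnj w"
  have k0: "k \<noteq> 0" unfolding k_def using cw0 by simp
  have pe: "p = - e / ce"
  proof -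
    have "p = (of_real v * (Oc - I)) / (of_real v * cnj (Oc - I))" unfolding p_def wv by simp
    also have "\<dots> = (Oc - I) / cnj (Oc - I)" using v0 by simp
    also have "\<dots> = (- L * d1 * d2 * d3 * e) / (L * d1 * d2 * d3 * ce)"
      by (subst cOI) (subst OI, rule refl)
    also have "\<dots> = - e / ce" using L0 u1(2) u2(2) u3(2) ce0 by (simp add: field_simps)
    finally show ?thesis .
  qed
  have Pk: "M + k * p = P" unfolding M_def k_def p_def w_def using cw0 by (simp add: field_simps w_def)
  have fA: "foot P A I = M + k * (- (d2 * d3))"
    unfolding foot_center[of A I P, OF rA(2)[unfolded right_minus_eq]] rA(1) M_def k_def w_def
    by (simp add: field_simps)
  have fB: "foot P B I = M + k * (- (d3 * d1))"
    unfolding foot_center[of B I P, OF rB(2)[unfolded right_minus_eq]] rB(1) M_def k_def w_def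
    by (simp add: field_simps)
  have fC: "foot P C I = M + k * (- (d1 * d2))"
    unfolding foot_center[of C I P, OF rC(2)[unfolded right_minus_eq]] rC(1) M_def k_def w_def
    by (simp add: field_simps)
  have sig: "- (d2 * d3) + - (d3 * d1) + - (d1 * d2) = - (d1 * d2 * d3) * ce"
    unfolding ce_def using u1(2) u2(2) u3(2) by (simp add: field_simps)
  have N: "steiner_line (M + k * p) (M + k * (- (d2 * d3))) (M + k * (- (d3 * d1))) (M + k * (- (d1 * d2)))
           = euler_line (M + k * (- (d2 * d3))) (M + k * (- (d3 * d1))) (M + k * (- (d1 * d2)))
       \<and> centroid (M + k * (- (d2 * d3))) (M + k * (- (d3 * d1))) (M + k * (- (d1 * d2)))
           \<noteq> circumcenter (M + k * (- (d2 * d3))) (M + k * (- (d3 * d1))) (M + k * (- (d1 * d2)))"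
  proof (rule normalized[OF k0])
    show "cnj (- (d2 * d3)) = inverse (- (d2 * d3))" "cnj (- (d3 * d1)) = inverse (- (d3 * d1))"
      "cnj (- (d1 * d2)) = inverse (- (d1 * d2))" by (simp_all add: u1(1) u2(1) u3(1))
    show "- (d2 * d3) \<noteq> 0" "- (d3 * d1) \<noteq> 0" "- (d1 * d2) \<noteq> 0" using u1(2) u2(2) u3(2) by simp_all
    show "cnj p = inverse p" unfolding p_def by simp
    show "p \<noteq> 0" unfolding p_def using w0 cw0 by simp
    show "- (d2 * d3) \<noteq> - (d3 * d1)" using n12(1) u3(2) by simp
    show "- (d3 * d1) \<noteq> - (d1 * d2)" using n23(1) u1(2) by (simp add: mult.commute)
    show "- (d1 * d2) \<noteq> - (d2 * d3)" using n13(1) u2(2) by (simp add: mult.commute)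
    show "- (d2 * d3) + - (d3 * d1) + - (d1 * d2) \<noteq> 0" unfolding sig using u1(2) u2(2) u3(2) ce0 by simp
    show "p * (- (d2 * d3) + - (d3 * d1) + - (d1 * d2)) =
      - (d2 * d3) * - (d3 * d1) + - (d3 * d1) * - (d1 * d2) + - (d1 * d2) * - (d2 * d3)"
      unfolding sig pe e_def using ce0 by (simp add: field_simps)
  qed
  show ?thesis using N unfolding Pk fA[symmetric] fB[symmetric] fC[symmetric] I_def .
qed


end
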